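(* Let $p>0$ and let $u\in\mathcal{L}(\ell_p;\ell_p)$ with $u\neq0$. Let $(\mathbb{N}_k)_{k=1}^\infty$ be a partition of $\mathbb{N}$ into infinite pairwise disjoint subsets, $\mathbb{N}_k=\{n^{(k)}_1<n^{(k)}_2<\cdots\}$, and for each $k$ define $u_k\in\mathcal{L}(\ell_p;\ell_p)$ by $u_k(x)_{n^{(k)}_i}=u(x)_i$ for all $i\in\mathbb{N}$ and $u_k(x)_m=0$ for $m\notin\mathbb{N}_k$. Then the map $T:\ell_p\to\mathcal{L}(\ell_p;\ell_p)$ given by $T((a_k)_{k=1}^\infty)=\sum_{k=1}^\infty a_k u_k$ is well defined, linear and injective.
   Context: For $0<p<1$, $\ell_p$ is the $p$-Banach space of scalar sequences with $\|x\|_p=(\sum_k|x_k|^p)^{1/p}<\infty$; for $p\ge1$ it is the usual Banach space. $\mathcal{L}(\ell_p;\ell_p)$ is the space of bounded linear operators on $\ell_p$ with the operator (quasi-)norm, and the series defining $T$ is understood as convergent in this (quasi-)norm. *)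

theory Defs
  imports "HOL-Analysis.Analysis" "HOL-Library.Infinite_Set"
begin

text \<open>Sequences are indexed by nat (starting at 0); scalars range over an arbitrary
 real normed field (covers both the real and the complex case).\<close>

definition lp_space :: "real \<Rightarrow> (nat \<Rightarrow> 'a::real_normed_field) set" where
  "lp_space p = {x. summable (\<lambda>k. norm (x k) powr p)}"

definition lp_norm :: "real \<Rightarrow> (nat \<Rightarrow> 'a::real_normed_field) \<Rightarrow> real" where
  "lp_norm p x = (\<Sum>k. norm (x k) powr p) powr (1 / p)"

text \<open>Bounded linear operator on l_p (only its behaviour on l_p matters).\<close>
definition bounded_lp_op :: "real \<Rightarrow> ((nat \<Rightarrow> 'a::real_normed_field) \<Rightarrow> (nat \<Rightarrow> 'a)) \<Rightarrow> bool" where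
  "bounded_lp_op p u \<longleftrightarrow>
     (\<forall>x \<in> lp_space p. u x \<in> lp_space p) \<and>
     (\<forall>x \<in> lp_space p. \<forall>y \<in> lp_space p. u (\<lambda>i. x i + y i) = (\<lambda>i. u x i + u y i)) \<and>
     (\<forall>x \<in> lp_space p. \<forall>c. u (\<lambda>i. c * x i) = (\<lambda>i. c * u x i)) \<and>
     (\<exists>C. \<forall>x \<in> lp_space p. lp_norm p (u x) \<le> C * lp_norm p x)"

definition lp_op_norm :: "real \<Rightarrow> ((nat \<Rightarrow> 'a::real_normed_field) \<Rightarrow> (nat \<Rightarrow> 'a)) \<Rightarrow> real" where
  "lp_op_norm p u = Sup ((\<lambda>x. lp_norm p (u x)) ` {x \<in> lp_space p. lp_norm p x \<le> 1})"

definition op_series_sums :: "real \<Rightarrow> (nat \<Rightarrow> 'a::real_normed_field)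
     \<Rightarrow> (nat \<Rightarrow> (nat \<Rightarrow> 'a) \<Rightarrow> (nat \<Rightarrow> 'a)) \<Rightarrow> ((nat \<Rightarrow> 'a) \<Rightarrow> (nat \<Rightarrow> 'a)) \<Rightarrow> bool" where
  "op_series_sums p a v S \<longleftrightarrow> bounded_lp_op p S \<and>
     (\<lambda>n. lp_op_norm p (\<lambda>x. \<lambda>i. S x i - (\<Sum>k<n. a k * v k x i))) \<longlonglongrightarrow> 0"

end

theory Submission
  imports Defs
begin


lemma powr_add_le:
  fixes A B q :: real
  assumes "A \<ge> 0" "B \<ge> 0" "q > 0"
  shows "(A + B) powr q \<le> 2 powr q * (A powr q + B powr q)"
proof -
  have "(A + B) powr q \<le> (2 * max A B) powr q"
    using assms by (intro powr_mono2) auto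
  also have "\<dots> = 2 powr q * max A B powr q"
    using assms by (simp add: powr_mult)
  also have "max A B powr q \<le> A powr q + B powr q"
    by (cases "A \<le> B") (auto simp: max_def)
  hence "2 powr q * max A B powr q \<le> 2 powr q * (A powr q + B powr q)"
    by (intro mult_left_mono) auto
  finally show ?thesis .
qed

definition lpsum :: "real \<Rightarrow> (nat \<Rightarrow> 'a::real_normed_field) \<Rightarrow> real" where
  "lpsum p x = (\<Sum>k. norm (x k) powr p)"

lemma lpsum_nonneg: "x \<in> lp_space p \<Longrightarrow> lpsum p x \<ge> 0"
  unfolding lpsum_def lp_space_def by (auto intro!: suminf_nonneg)

lemma lp_norm_nonneg: "lp_norm p x \<ge> 0"
  unfolding lp_norm_def by simp

lemma lp_norm_lpsum: "lp_norm p x = lpsum p x powr (1/p)"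
  unfolding lp_norm_def lpsum_def by simp

lemma lp_norm_pow: "p > 0 \<Longrightarrow> x \<in> lp_space p \<Longrightarrow> lp_norm p x powr p = lpsum p x"
  unfolding lp_norm_lpsum using lpsum_nonneg[of x p] by (simp add: powr_powr)

lemma lp_zero: "p > 0 \<Longrightarrow> (\<lambda>_. 0::'a::real_normed_field) \<in> lp_space p \<and> lp_norm p (\<lambda>_. 0::'a) = 0"
  unfolding lp_space_def lp_norm_def by simp

lemma lp_scale:
  fixes x :: "nat \<Rightarrow> 'a::real_normed_field"
  assumes p: "p > 0" and x: "x \<in> lp_space p"
  shows "(\<lambda>i. c * x i) \<in> lp_space p \<and> lp_norm p (\<lambda>i. c * x i) = norm c * lp_norm p x"
proof -
  have sx: "summable (\<lambda>k. norm (x k) powr p)" using x unfolding lp_space_def by simp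
  have eq: "(\<lambda>k. norm (c * x k) powr p) = (\<lambda>k. norm c powr p * norm (x k) powr p)"
    by (simp add: norm_mult powr_mult)
  have s1: "(\<lambda>i. c * x i) \<in> lp_space p"
    unfolding lp_space_def using summable_mult[OF sx, of "norm c powr p"] eq by simp
  have "lpsum p (\<lambda>i. c * x i) = norm c powr p * lpsum p x"
    unfolding lpsum_def eq using suminf_mult[OF sx] by simp
  hence "lp_norm p (\<lambda>i. c * x i) = (norm c powr p * lpsum p x) powr (1/p)"
    by (simp add: lp_norm_lpsum)
  also have "\<dots> = norm c * lp_norm p x"
    using p lpsum_nonneg[OF x] by (simp add: powr_mult powr_powr lp_norm_lpsum)
  finally show ?thesis using s1 by simp
qed

lemma lp_add:
  fixes x y :: "nat \<Rightarrow> 'a::real_normed_field"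
  assumes p: "p > 0" and x: "x \<in> lp_space p" and y: "y \<in> lp_space p"
  shows "(\<lambda>i. x i + y i) \<in> lp_space p \<and>
    lp_norm p (\<lambda>i. x i + y i) \<le> 2 * 2 powr (1/p) * (lp_norm p x + lp_norm p y)"
proof -
  have sx: "summable (\<lambda>k. norm (x k) powr p)" using x unfolding lp_space_def by simp
  have sy: "summable (\<lambda>k. norm (y k) powr p)" using y unfolding lp_space_def by simp
  have pt: "norm (x k + y k) powr p \<le> 2 powr p * (norm (x k) powr p + norm (y k) powr p)" for k
  proof -
    have "norm (x k + y k) powr p \<le> (norm (x k) + norm (y k)) powr p"
      using p by (intro powr_mono2 norm_triangle_ineq) auto
    also have "\<dots> \<le> 2 powr p * (norm (x k) powr p + norm (y k) powr p)"
      using p by (intro powr_add_le) auto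
    finally show ?thesis .
  qed
  have sxy: "summable (\<lambda>k. 2 powr p * (norm (x k) powr p + norm (y k) powr p))"
    by (intro summable_mult summable_add sx sy)
  have s1: "summable (\<lambda>k. norm (x k + y k) powr p)"
    by (rule summable_comparison_test'[OF sxy]) (use pt in auto)
  have "lpsum p (\<lambda>i. x i + y i) \<le> (\<Sum>k. 2 powr p * (norm (x k) powr p + norm (y k) powr p))"
    unfolding lpsum_def by (intro suminf_le pt s1 sxy)
  also have "\<dots> = 2 powr p * (lpsum p x + lpsum p y)"
    unfolding lpsum_def by (simp add: suminf_mult suminf_add sx sy summable_add)
  finally have le: "lpsum p (\<lambda>i. x i + y i) \<le> 2 powr p * (lpsum p x + lpsum p y)" .
  have "lp_norm p (\<lambda>i. x i + y i) \<le> (2 powr p * (lpsum p x + lpsum p y)) powr (1/p)"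
    unfolding lp_norm_lpsum using p le s1
    by (intro powr_mono2) (auto intro!: suminf_nonneg simp: lpsum_def)
  also have "\<dots> = 2 * (lpsum p x + lpsum p y) powr (1/p)"
    using p lpsum_nonneg[OF x] lpsum_nonneg[OF y] by (simp add: powr_mult powr_powr)
  also have "(lpsum p x + lpsum p y) powr (1/p) \<le> 2 powr (1/p) * (lp_norm p x + lp_norm p y)"
    unfolding lp_norm_lpsum using p lpsum_nonneg[OF x] lpsum_nonneg[OF y]
    by (intro powr_add_le) auto
  finally show ?thesis using s1 unfolding lp_space_def by simp
qed

lemma lp_point:
  fixes x :: "nat \<Rightarrow> 'a::real_normed_field"
  assumes p: "p > 0" and x: "x \<in> lp_space p"
  shows "norm (x m) \<le> lp_norm p x"
proof -
  have sx: "summable (\<lambda>k. norm (x k) powr p)" using x unfolding lp_space_def by simp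
  have "norm (x m) powr p \<le> lpsum p x"
    unfolding lpsum_def using sum_le_suminf[OF sx, of "{m}"] by simp
  hence "(norm (x m) powr p) powr (1/p) \<le> lpsum p x powr (1/p)"
    using p by (intro powr_mono2) auto
  thus ?thesis using p by (simp add: powr_powr lp_norm_lpsum)
qed

definition bnd :: "real \<Rightarrow> ((nat \<Rightarrow> 'a::real_normed_field) \<Rightarrow> (nat \<Rightarrow> 'a)) \<Rightarrow> bool" where
  "bnd p f \<longleftrightarrow> (\<forall>x \<in> lp_space p. f x \<in> lp_space p) \<and>
     (\<exists>C. \<forall>x \<in> lp_space p. lp_norm p (f x) \<le> C * lp_norm p x)"

lemma bnd_add:
  fixes f g :: "(nat \<Rightarrow> 'a::real_normed_field) \<Rightarrow> (nat \<Rightarrow> 'a)"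
  assumes p: "p > 0" and f: "bnd p f" and g: "bnd p g"
  shows "bnd p (\<lambda>x i. f x i + g x i)"
proof -
  obtain C1 where C1: "\<forall>x \<in> lp_space p. lp_norm p (f x) \<le> C1 * lp_norm p x" using f bnd_def by blast
  obtain C2 where C2: "\<forall>x \<in> lp_space p. lp_norm p (g x) \<le> C2 * lp_norm p x" using g bnd_def by blast
  have "\<forall>x \<in> (lp_space p :: (nat \<Rightarrow> 'a) set). lp_norm p (\<lambda>i. f x i + g x i) \<le> (2 * 2 powr (1/p) * (C1 + C2)) * lp_norm p x"
  proof
    fix x :: "nat \<Rightarrow> 'a" assume x: "x \<in> lp_space p"
    have "lp_norm p (\<lambda>i. f x i + g x i) \<le> 2 * 2 powr (1/p) * (lp_norm p (f x) + lp_norm p (g x))"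
      using lp_add[OF p, of "f x" "g x"] f g x unfolding bnd_def by auto
    also have "\<dots> \<le> 2 * 2 powr (1/p) * (C1 * lp_norm p x + C2 * lp_norm p x)"
      using C1 C2 x by (intro mult_left_mono add_mono) auto
    finally show "lp_norm p (\<lambda>i. f x i + g x i) \<le> (2 * 2 powr (1/p) * (C1 + C2)) * lp_norm p x"
      by (simp add: algebra_simps)
  qed
  moreover have "\<forall>x \<in> (lp_space p :: (nat \<Rightarrow> 'a) set). (\<lambda>i. f x i + g x i) \<in> lp_space p"
  proof
    fix x :: "nat \<Rightarrow> 'a" assume x: "x \<in> lp_space p"
    show "(\<lambda>i. f x i + g x i) \<in> lp_space p"
      using lp_add[OF p, of "f x" "g x"] f g x unfolding bnd_def by auto
  qed
  ultimately show ?thesis unfolding bnd_def by (intro conjI exI)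
qed

lemma bnd_scale:
  fixes f g :: "(nat \<Rightarrow> 'a::real_normed_field) \<Rightarrow> (nat \<Rightarrow> 'a)"
  assumes p: "p > 0" and f: "bnd p f"
  shows "bnd p (\<lambda>x i. c * f x i)"
proof -
  obtain C1 where C1: "\<forall>x \<in> lp_space p. lp_norm p (f x) \<le> C1 * lp_norm p x" using f bnd_def by blast
  have "\<forall>x \<in> (lp_space p :: (nat \<Rightarrow> 'a) set). lp_norm p (\<lambda>i. c * f x i) \<le> (norm c * C1) * lp_norm p x"
  proof
    fix x :: "nat \<Rightarrow> 'a" assume x: "x \<in> lp_space p"
    have "lp_norm p (\<lambda>i. c * f x i) = norm c * lp_norm p (f x)"
      using lp_scale[OF p, of "f x" c] f x unfolding bnd_def by auto
    also have "\<dots> \<le> norm c * (C1 * lp_norm p x)"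
      using C1 x by (intro mult_left_mono) auto
    finally show "lp_norm p (\<lambda>i. c * f x i) \<le> (norm c * C1) * lp_norm p x" by simp
  qed
  moreover have "\<forall>x \<in> (lp_space p :: (nat \<Rightarrow> 'a) set). (\<lambda>i. c * f x i) \<in> lp_space p"
  proof
    fix x :: "nat \<Rightarrow> 'a" assume x: "x \<in> lp_space p"
    show "(\<lambda>i. c * f x i) \<in> lp_space p"
      using lp_scale[OF p, of "f x" c] f x unfolding bnd_def by auto
  qed
  ultimately show ?thesis unfolding bnd_def by (intro conjI exI)
qed

lemma bnd_zero: "p > 0 \<Longrightarrow> bnd p (\<lambda>(x::nat\<Rightarrow>'a::real_normed_field) i. 0::'a)"
  unfolding bnd_def using lp_zero[of p] by (auto intro: exI[of _ 0])

lemma bnd_diff: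
  fixes f g :: "(nat \<Rightarrow> 'a::real_normed_field) \<Rightarrow> (nat \<Rightarrow> 'a)"
  assumes p: "p > 0" and f: "bnd p f" and g: "bnd p g"
  shows "bnd p (\<lambda>x i. f x i - g x i)"
  using bnd_add[OF p f bnd_scale[OF p g, of "-1"]] by simp

lemma opnorm_le:
  fixes f g :: "(nat \<Rightarrow> 'a::real_normed_field) \<Rightarrow> (nat \<Rightarrow> 'a)"
  assumes p: "p > 0" and f: "bnd p f" and x: "x \<in> lp_space p" and x1: "lp_norm p x \<le> 1"
  shows "lp_norm p (f x) \<le> lp_op_norm p f"
proof -
  obtain C1 where C1: "\<forall>x \<in> lp_space p. lp_norm p (f x) \<le> C1 * lp_norm p x" using f bnd_def by blast
  have "bdd_above ((\<lambda>x. lp_norm p (f x)) ` {x \<in> lp_space p. lp_norm p x \<le> 1})"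
  proof (rule bdd_aboveI2)
    fix y :: "nat \<Rightarrow> 'a" assume "y \<in> {x \<in> lp_space p. lp_norm p x \<le> 1}"
    hence "y \<in> lp_space p" "lp_norm p y \<le> 1" by auto
    hence "lp_norm p (f y) \<le> C1 * lp_norm p y" "0 \<le> lp_norm p y" using C1 lp_norm_nonneg by auto
    moreover have "C1 * lp_norm p y \<le> max C1 0"
    proof (cases "C1 \<ge> 0")
      case True thus ?thesis using \<open>lp_norm p y \<le> 1\<close> \<open>0 \<le> lp_norm p y\<close>
        by (simp add: mult_left_le)
    next
      case False thus ?thesis using \<open>0 \<le> lp_norm p y\<close> by (simp add: mult_nonpos_nonneg)
    qed
    ultimately show "lp_norm p (f y) \<le> max C1 0" by linarith
  qed
  thus ?thesis unfolding lp_op_norm_def using x x1 by (intro cSup_upper) auto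
qed

lemma opnorm_nonneg:
  fixes f g :: "(nat \<Rightarrow> 'a::real_normed_field) \<Rightarrow> (nat \<Rightarrow> 'a)"
  assumes p: "p > 0" and f: "bnd p f"
  shows "0 \<le> lp_op_norm p f"
proof -
  have "lp_norm p (f (\<lambda>_. 0)) \<le> lp_op_norm p f"
    using opnorm_le[OF p f, of "\<lambda>_. 0"] lp_zero[OF p, where 'a='a] by simp
  thus ?thesis using lp_norm_nonneg[of p "f (\<lambda>_. 0)"] by linarith
qed

lemma opnorm_least:
  fixes f :: "(nat \<Rightarrow> 'a::real_normed_field) \<Rightarrow> (nat \<Rightarrow> 'a)"
  assumes p: "p > 0" and B: "\<And>x. x \<in> lp_space p \<Longrightarrow> lp_norm p x \<le> 1 \<Longrightarrow> lp_norm p (f x) \<le> B"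
  shows "lp_op_norm p f \<le> B"
  unfolding lp_op_norm_def using lp_zero[OF p] B by (intro cSup_least) auto



locale lpsetup =
  fixes p :: real
    and u :: "(nat \<Rightarrow> 'a::real_normed_field) \<Rightarrow> (nat \<Rightarrow> 'a)"
    and N :: "nat \<Rightarrow> nat set"
    and uk :: "nat \<Rightarrow> (nat \<Rightarrow> 'a) \<Rightarrow> (nat \<Rightarrow> 'a)"
  assumes p_pos: "p > 0"
    and u_op: "bounded_lp_op p u"
    and N_inf: "\<And>k. infinite (N k)"
    and N_disj: "\<And>k j. k \<noteq> j \<Longrightarrow> N k \<inter> N j = {}"
    and N_cover: "(\<Union>k. N k) = UNIV"
    and uk_on: "\<And>k x i. uk k x (enumerate (N k) i) = u x i"
    and uk_off: "\<And>k x m. m \<notin> N k \<Longrightarrow> uk k x m = 0"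
begin

definition kof :: "nat \<Rightarrow> nat" where "kof m = (SOME k. m \<in> N k)"
definition idx :: "nat \<Rightarrow> nat" where "idx m = (SOME i. enumerate (N (kof m)) i = m)"

lemma kof_in: "m \<in> N (kof m)"
proof -
  have "\<exists>k. m \<in> N k" using N_cover by auto
  thus ?thesis unfolding kof_def by (rule someI_ex)
qed

lemma kof_unique: "m \<in> N k \<Longrightarrow> kof m = k"
  using kof_in[of m] N_disj[of k "kof m"] by blast

lemma uk_other: "k \<noteq> kof m \<Longrightarrow> uk k x m = 0"
  using kof_in[of m] N_disj[of k "kof m"] uk_off by blast

lemma N_enum: "m \<in> N k \<Longrightarrow> \<exists>i. enumerate (N k) i = m"
proof -
  assume "m \<in> N k"
  hence "m \<in> range (enumerate (N k))" using range_enumerate[OF N_inf[of k]] by simp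
  thus ?thesis by (auto elim!: rangeE intro: sym)
qed

lemma idx_eq: "enumerate (N (kof m)) (idx m) = m"
  unfolding idx_def using N_enum[OF kof_in[of m]] by (rule someI_ex)

lemma uk_idx: "uk (kof m) x m = u x (idx m)"
  using uk_on[of "kof m" x "idx m"] idx_eq[of m] by simp

lemma u_add: "x \<in> lp_space p \<Longrightarrow> y \<in> lp_space p \<Longrightarrow> u (\<lambda>i. x i + y i) = (\<lambda>i. u x i + u y i)"
  using u_op unfolding bounded_lp_op_def by blast

lemma u_scale: "x \<in> lp_space p \<Longrightarrow> u (\<lambda>i. c * x i) = (\<lambda>i. c * u x i)"
  using u_op unfolding bounded_lp_op_def by blast

lemma uk_add: "x \<in> lp_space p \<Longrightarrow> y \<in> lp_space p \<Longrightarrow> uk k (\<lambda>i. x i + y i) m = uk k x m + uk k y m"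
proof (cases "m \<in> N k")
  case True
  then obtain i where i: "enumerate (N k) i = m" using N_enum by blast
  assume "x \<in> lp_space p" "y \<in> lp_space p"
  have "uk k (\<lambda>i. x i + y i) m = u (\<lambda>i. x i + y i) i" "uk k x m = u x i" "uk k y m = u y i"
    using uk_on[of k _ i] i by auto
  thus ?thesis using u_add[OF \<open>x \<in> lp_space p\<close> \<open>y \<in> lp_space p\<close>] by simp
next
  case False thus ?thesis using uk_off by simp
qed

lemma uk_scale: "x \<in> lp_space p \<Longrightarrow> uk k (\<lambda>i. c * x i) m = c * uk k x m"
proof (cases "m \<in> N k")
  case True
  then obtain i where i: "enumerate (N k) i = m" using N_enum by blast
  assume "x \<in> lp_space p"
  have "uk k (\<lambda>i. c * x i) m = u (\<lambda>i. c * x i) i" "uk k x m = u x i"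
    using uk_on[of k _ i] i by auto
  thus ?thesis using u_scale[OF \<open>x \<in> lp_space p\<close>] by simp
next
  case False thus ?thesis using uk_off by simp
qed

definition SS :: "(nat \<Rightarrow> 'a) \<Rightarrow> (nat \<Rightarrow> 'a) \<Rightarrow> (nat \<Rightarrow> 'a)" where
  "SS b x = (\<lambda>m. b (kof m) * uk (kof m) x m)"

lemma SS_lpsum:
  assumes b: "b \<in> lp_space p" and x: "x \<in> lp_space p"
  shows "SS b x \<in> lp_space p \<and> lpsum p (SS b x) \<le> lpsum p b * lpsum p (u x)"
proof -
  have ux: "u x \<in> lp_space p" using u_op x unfolding bounded_lp_op_def by blast
  define B where "B k = norm (b k) powr p" for k
  define U where "U i = norm (u x i) powr p" for i
  define G where "G = (\<lambda>(k, i). B k * U i)"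
  define F where "F m = norm (SS b x m) powr p" for m
  define \<phi> where "\<phi> m = (kof m, idx m)" for m
  have sB: "summable B" using b unfolding B_def lp_space_def by simp
  have sU: "summable U" using ux unfolding U_def lp_space_def by simp
  have FG: "F m = G (\<phi> m)" for m
    unfolding F_def G_def \<phi>_def SS_def B_def U_def by (simp add: uk_idx norm_mult powr_mult)
  have inj: "inj_on \<phi> A" for A
  proof (rule inj_onI)
    fix m m' assume "\<phi> m = \<phi> m'"
    hence "kof m = kof m'" "idx m = idx m'" unfolding \<phi>_def by auto
    thus "m = m'" using idx_eq[of m] idx_eq[of m'] by metis
  qed
  have Gnn: "G q \<ge> 0" for q unfolding G_def B_def U_def by (auto split: prod.splits)
  have bound: "sum F {..<M} \<le> lpsum p b * lpsum p (u x)" for M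
  proof -
    define A where "A = \<phi> ` {..<M}"
    have fA: "finite A" unfolding A_def by simp
    have sub: "A \<subseteq> fst ` A \<times> snd ` A"
    proof
      fix q assume "q \<in> A" thus "q \<in> fst ` A \<times> snd ` A"
        by (cases q) (auto intro: rev_image_eqI)
    qed
    have "sum F {..<M} = sum G A"
      unfolding A_def using FG sum.reindex[OF inj, of G "{..<M}"] by simp
    also have "\<dots> \<le> sum G (fst ` A \<times> snd ` A)"
      using fA Gnn sub by (intro sum_mono2) auto
    also have "\<dots> = sum B (fst ` A) * sum U (snd ` A)"
      unfolding G_def sum_product sum.cartesian_product by simp
    also have "\<dots> \<le> suminf B * suminf U"
      using fA sB sU by (intro mult_mono sum_le_suminf suminf_nonneg)
        (auto simp: B_def U_def intro!: sum_nonneg)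
    finally show ?thesis unfolding lpsum_def B_def U_def by simp
  qed
  have Fnn: "F m \<ge> 0" for m unfolding F_def by simp
  have sF: "summable F" by (rule summableI_nonneg_bounded[OF Fnn bound])
  have "suminf F \<le> lpsum p b * lpsum p (u x)" by (rule suminf_le_const[OF sF bound])
  thus ?thesis using sF unfolding lp_space_def lpsum_def F_def by simp
qed

lemma SS_norm:
  assumes b: "b \<in> lp_space p" and x: "x \<in> lp_space p"
  shows "SS b x \<in> lp_space p \<and> lp_norm p (SS b x) \<le> lp_norm p b * lp_norm p (u x)"
proof -
  have ux: "u x \<in> lp_space p" using u_op x unfolding bounded_lp_op_def by blast
  have 1: "SS b x \<in> lp_space p" "lpsum p (SS b x) \<le> lpsum p b * lpsum p (u x)"
    using SS_lpsum[OF b x] by auto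
  have "lp_norm p (SS b x) \<le> (lpsum p b * lpsum p (u x)) powr (1/p)"
    unfolding lp_norm_lpsum using 1 p_pos lpsum_nonneg[OF 1(1)] by (intro powr_mono2) auto
  also have "\<dots> = lp_norm p b * lp_norm p (u x)"
    unfolding lp_norm_lpsum using lpsum_nonneg[OF b] lpsum_nonneg[OF ux] by (simp add: powr_mult)
  finally show ?thesis using 1 by simp
qed

lemma uk_lp:
  assumes x: "x \<in> lp_space p"
  shows "uk k x \<in> lp_space p \<and> lp_norm p (uk k x) \<le> lp_norm p (u x)"
proof -
  define e :: "nat \<Rightarrow> 'a" where "e j = (if j = k then 1 else 0)" for j
  have eq: "(\<lambda>j. norm (e j) powr p) = (\<lambda>j. if j = k then 1 else 0)"
    unfolding e_def by auto
  have "summable (\<lambda>j. if j = k then 1 else (0::real))"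
    by (rule summable_finite[of "{k}"]) auto
  hence e: "e \<in> lp_space p" unfolding lp_space_def using eq by simp
  have "(\<Sum>j. if j = k then 1 else (0::real)) = 1"
    by (subst suminf_finite[of "{k}"]) auto
  hence e1: "lp_norm p e = 1" unfolding lp_norm_def eq by simp
  have "SS e x = uk k x"
    unfolding SS_def e_def using uk_other by (auto intro!: ext)
  thus ?thesis using SS_norm[OF e x] e1 by simp
qed

lemma Cu: obtains Cu where "\<And>x. x \<in> lp_space p \<Longrightarrow> lp_norm p (u x) \<le> Cu * lp_norm p x"
  using u_op unfolding bounded_lp_op_def by blast

lemma bnd_uk: "bnd p (uk k)"
proof -
  obtain Cu where C: "\<And>x. x \<in> lp_space p \<Longrightarrow> lp_norm p (u x) \<le> Cu * lp_norm p x" using Cu by blast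
  have "lp_norm p (uk k x) \<le> Cu * lp_norm p x" if "x \<in> lp_space p" for x
  proof -
    have "lp_norm p (uk k x) \<le> lp_norm p (u x)" using uk_lp[OF that] by blast
    thus ?thesis using C[OF that] by linarith
  qed
  thus ?thesis unfolding bnd_def using uk_lp by blast
qed

lemma bnd_P: "bnd p (\<lambda>x i. \<Sum>k<n. a k * uk k x i)"
proof (induction n)
  case 0 thus ?case using bnd_zero[OF p_pos] by simp
next
  case (Suc n)
  have "bnd p (\<lambda>x i. (\<Sum>k<n. a k * uk k x i) + a n * uk n x i)"
    by (rule bnd_add[OF p_pos Suc bnd_scale[OF p_pos bnd_uk]])
  thus ?case by simp
qed

lemma bnd_of_bounded: "bounded_lp_op p S \<Longrightarrow> bnd p S"
  unfolding bounded_lp_op_def bnd_def by blast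

lemma bnd_R: "bounded_lp_op p S \<Longrightarrow> bnd p (\<lambda>x i. S x i - (\<Sum>k<n. a k * uk k x i))"
  by (rule bnd_diff[OF p_pos bnd_of_bounded bnd_P])

end


context lpsetup begin

lemma pointwise:
  assumes S: "op_series_sums p a uk S" and x: "x \<in> lp_space p"
  shows "(\<lambda>n. \<Sum>k<n. a k * uk k x m) \<longlonglongrightarrow> S x m"
proof -
  define R where "R n = (\<lambda>x i. S x i - (\<Sum>k<n. a k * uk k x i))" for n
  have bS: "bounded_lp_op p S" and lim: "(\<lambda>n. lp_op_norm p (R n)) \<longlonglongrightarrow> 0"
    using S unfolding op_series_sums_def R_def by auto
  have bR: "bnd p (R n)" for n unfolding R_def by (rule bnd_R[OF bS])
  define c :: 'a where "c = of_real (1 / (lp_norm p x + 1))"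
  have nx: "lp_norm p x \<ge> 0" by (rule lp_norm_nonneg)
  have nc: "norm c = 1 / (lp_norm p x + 1)" unfolding c_def norm_of_real using nx by simp
  have c0: "c \<noteq> 0" using nc nx by auto
  define y where "y = (\<lambda>i. c * x i)"
  have y: "y \<in> lp_space p" "lp_norm p y = norm c * lp_norm p x"
    using lp_scale[OF p_pos x, of c] unfolding y_def by auto
  have "lp_norm p y = lp_norm p x / (lp_norm p x + 1)" using y(2) nc by simp
  hence y1: "lp_norm p y \<le> 1" using nx by (simp add: divide_le_eq)
  have Sy: "S y = (\<lambda>i. c * S x i)" using bS x unfolding bounded_lp_op_def y_def by blast
  have Ry: "R n y m = c * (S x m - (\<Sum>k<n. a k * uk k x m))" for n
    unfolding R_def Sy using uk_scale[OF x, of _ c] unfolding y_def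
    by (simp add: sum_distrib_left right_diff_distrib mult.left_commute)
  have le: "norm (S x m - (\<Sum>k<n. a k * uk k x m)) \<le> lp_op_norm p (R n) * (lp_norm p x + 1)" for n
  proof -
    have "norm (R n y m) \<le> lp_norm p (R n y)"
      using lp_point[OF p_pos, of "R n y" m] bR[of n] y unfolding bnd_def by blast
    also have "\<dots> \<le> lp_op_norm p (R n)" by (rule opnorm_le[OF p_pos bR y(1) y1])
    finally have "norm c * norm (S x m - (\<Sum>k<n. a k * uk k x m)) \<le> lp_op_norm p (R n)"
      unfolding Ry norm_mult .
    thus ?thesis unfolding nc using nx by (simp add: field_simps)
  qed
  have "(\<lambda>n. S x m - (\<Sum>k<n. a k * uk k x m)) \<longlonglongrightarrow> 0"
  proof (rule Lim_null_comparison)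
    show "eventually (\<lambda>n. norm (S x m - (\<Sum>k<n. a k * uk k x m)) \<le> lp_op_norm p (R n) * (lp_norm p x + 1)) sequentially"
      using le by (intro always_eventually) auto
    show "(\<lambda>n. lp_op_norm p (R n) * (lp_norm p x + 1)) \<longlonglongrightarrow> 0"
      by (rule tendsto_mult_left_zero[OF lim])
  qed
  hence "(\<lambda>n. S x m - (S x m - (\<Sum>k<n. a k * uk k x m))) \<longlonglongrightarrow> S x m - 0"
    by (intro tendsto_diff tendsto_const)
  thus ?thesis by simp
qed

lemma bounded_SS:
  assumes a: "a \<in> lp_space p"
  obtains Cu where "bounded_lp_op p (SS a)"
    "\<And>b x. b \<in> lp_space p \<Longrightarrow> x \<in> lp_space p \<Longrightarrow> lp_norm p x \<le> 1 \<Longrightarrow>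
        lp_norm p (SS b x) \<le> lp_norm p b * max Cu 0"
proof -
  obtain Cu where C: "\<And>x. x \<in> lp_space p \<Longrightarrow> lp_norm p (u x) \<le> Cu * lp_norm p x" using Cu by blast
  have 1: "lp_norm p (SS b x) \<le> lp_norm p b * (Cu * lp_norm p x)" if "b \<in> lp_space p" "x \<in> lp_space p" for b x
  proof -
    have "lp_norm p (SS b x) \<le> lp_norm p b * lp_norm p (u x)" using SS_norm[OF that] by blast
    also have "\<dots> \<le> lp_norm p b * (Cu * lp_norm p x)"
      using C[OF that(2)] lp_norm_nonneg by (intro mult_left_mono) auto
    finally show ?thesis .
  qed
  have "bounded_lp_op p (SS a)"
    unfolding bounded_lp_op_def
  proof (intro conjI ballI allI)
    fix x :: "nat \<Rightarrow> 'a" assume "x \<in> lp_space p" thus "SS a x \<in> lp_space p" using SS_norm[OF a] by blast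
  next
    fix x y :: "nat \<Rightarrow> 'a" assume "x \<in> lp_space p" "y \<in> lp_space p"
    thus "SS a (\<lambda>i. x i + y i) = (\<lambda>i. SS a x i + SS a y i)"
      unfolding SS_def by (simp add: uk_add distrib_left)
  next
    fix x :: "nat \<Rightarrow> 'a" and c assume "x \<in> lp_space p"
    thus "SS a (\<lambda>i. c * x i) = (\<lambda>i. c * SS a x i)"
      unfolding SS_def by (simp add: uk_scale mult.left_commute)
  next
    show "\<exists>C. \<forall>x\<in>lp_space p. lp_norm p (SS a x) \<le> C * lp_norm p x"
      using 1[OF a] by (intro exI[of _ "lp_norm p a * Cu"]) (simp add: mult.assoc)
  qed
  moreover have "lp_norm p (SS b x) \<le> lp_norm p b * max Cu 0"
    if "b \<in> lp_space p" "x \<in> lp_space p" "lp_norm p x \<le> 1" for b x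
  proof -
    have "Cu * lp_norm p x \<le> max Cu 0"
    proof (cases "Cu \<ge> 0")
      case True thus ?thesis using that(3) lp_norm_nonneg[of p x] by (simp add: mult_left_le)
    next
      case False thus ?thesis using lp_norm_nonneg[of p x] by (simp add: mult_nonpos_nonneg)
    qed
    hence "lp_norm p b * (Cu * lp_norm p x) \<le> lp_norm p b * max Cu 0"
      using lp_norm_nonneg by (intro mult_left_mono) auto
    thus ?thesis using 1[OF that(1,2)] by linarith
  qed
  ultimately show ?thesis using that by blast
qed

lemma existence:
  assumes a: "a \<in> lp_space p"
  shows "op_series_sums p a uk (SS a)"
proof -
  obtain Cu where bS: "bounded_lp_op p (SS a)" and
    Cb: "\<And>b x. b \<in> lp_space p \<Longrightarrow> x \<in> lp_space p \<Longrightarrow> lp_norm p x \<le> 1 \<Longrightarrow>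
        lp_norm p (SS b x) \<le> lp_norm p b * max Cu 0"
    using bounded_SS[OF a] by blast
  define t where "t n k = (if n \<le> k then a k else 0)" for n k
  define f where "f k = norm (a k) powr p" for k
  have sf: "summable f" using a unfolding lp_space_def f_def by simp
  have res: "(\<lambda>x i. SS a x i - (\<Sum>k<n. a k * uk k x i)) = SS (t n)" for n
  proof (intro ext)
    fix x m
    have "(\<Sum>k<n. a k * uk k x m) = (\<Sum>k<n. if k = kof m then a k * uk k x m else 0)"
      by (rule sum.cong) (auto simp: uk_other)
    also have "\<dots> = (if kof m < n then a (kof m) * uk (kof m) x m else 0)" by simp
    finally show "SS a x m - (\<Sum>k<n. a k * uk k x m) = SS (t n) x m"
      unfolding SS_def t_def by auto
  qed
  have tn: "t n \<in> lp_space p \<and> lp_norm p (t n) = (\<Sum>i. f (i + n)) powr (1/p)" for n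
  proof -
    define g where "g k = norm (t n k) powr p" for k
    have g1: "g (i + n) = f (i + n)" for i unfolding g_def f_def t_def by simp
    have g2: "(\<Sum>i<n. g i) = 0" unfolding g_def t_def using p_pos by simp
    have "(\<lambda>i. f (i + n)) sums (\<Sum>i. f (i + n))"
      using sf by (simp add: summable_sums)
    hence "(\<lambda>i. g (i + n)) sums (\<Sum>i. f (i + n))" using g1 by simp
    hence "g sums (\<Sum>i. f (i + n))" using sums_iff_shift[of g n] g2 by simp
    thus ?thesis unfolding lp_space_def lp_norm_def g_def
      by (auto simp: sums_iff)
  qed
  have tail: "(\<lambda>n. \<Sum>i. f (i + n)) \<longlonglongrightarrow> 0"
  proof -
    have "(\<Sum>i. f (i + n)) = suminf f - (\<Sum>i<n. f i)" for n
      using sums_split_initial_segment[OF summable_sums[OF sf], of n] by (simp add: sums_iff)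
    moreover have "(\<lambda>n. suminf f - (\<Sum>i<n. f i)) \<longlonglongrightarrow> suminf f - suminf f"
      by (intro tendsto_diff tendsto_const summable_LIMSEQ sf)
    ultimately show ?thesis by simp
  qed
  have fnn: "f k \<ge> 0" for k unfolding f_def by simp
  have tl: "(\<lambda>n. lp_norm p (t n)) \<longlonglongrightarrow> 0"
    unfolding tn[THEN conjunct2]
    by (rule tendsto_zero_powrI[OF tail tendsto_const])
       (use p_pos fnn sf in \<open>auto intro!: always_eventually suminf_nonneg\<close>)
  have bnn: "bnd p (SS (t n))" for n using bnd_R[OF bS, where n=n and a=a] unfolding res .
  have "(\<lambda>n. lp_op_norm p (SS (t n))) \<longlonglongrightarrow> 0"
  proof (rule Lim_null_comparison[OF always_eventually])
    show "\<forall>n. norm (lp_op_norm p (SS (t n))) \<le> lp_norm p (t n) * max Cu 0"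
    proof
      fix n
      have "lp_op_norm p (SS (t n)) \<le> lp_norm p (t n) * max Cu 0"
        by (rule opnorm_least[OF p_pos]) (use Cb tn in blast)
      thus "norm (lp_op_norm p (SS (t n))) \<le> lp_norm p (t n) * max Cu 0"
        using opnorm_nonneg[OF p_pos bnn] by simp
    qed
    show "(\<lambda>n. lp_norm p (t n) * max Cu 0) \<longlonglongrightarrow> 0"
      using tendsto_mult_left_zero[OF tl] by simp
  qed
  thus ?thesis unfolding op_series_sums_def res using bS by simp
qed

end


context lpsetup begin

lemma combination:
  assumes S: "op_series_sums p a uk S" and S': "op_series_sums p b uk S'"
  shows "op_series_sums p (\<lambda>k. c * a k + b k) uk (\<lambda>x i. c * S x i + S' x i)"
proof -
  define Ra where "Ra n = (\<lambda>x i. S x i - (\<Sum>k<n. a k * uk k x i))" for n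
  define Rb where "Rb n = (\<lambda>x i. S' x i - (\<Sum>k<n. b k * uk k x i))" for n
  have bS: "bounded_lp_op p S" and limA: "(\<lambda>n. lp_op_norm p (Ra n)) \<longlonglongrightarrow> 0"
    using S unfolding op_series_sums_def Ra_def by auto
  have bS': "bounded_lp_op p S'" and limB: "(\<lambda>n. lp_op_norm p (Rb n)) \<longlonglongrightarrow> 0"
    using S' unfolding op_series_sums_def Rb_def by auto
  have bRa: "bnd p (Ra n)" for n unfolding Ra_def by (rule bnd_R[OF bS])
  have bRb: "bnd p (Rb n)" for n unfolding Rb_def by (rule bnd_R[OF bS'])
  have bC: "bnd p (\<lambda>x i. c * S x i + S' x i)"
    by (rule bnd_add[OF p_pos bnd_scale[OF p_pos bnd_of_bounded[OF bS]] bnd_of_bounded[OF bS']])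
  have bounded: "bounded_lp_op p (\<lambda>x i. c * S x i + S' x i)"
    unfolding bounded_lp_op_def
  proof (intro conjI ballI allI)
    fix x :: "nat \<Rightarrow> 'a" assume "x \<in> lp_space p"
    thus "(\<lambda>i. c * S x i + S' x i) \<in> lp_space p" using bC unfolding bnd_def by blast
  next
    fix x y :: "nat \<Rightarrow> 'a" assume x: "x \<in> lp_space p" and y: "y \<in> lp_space p"
    have "S (\<lambda>i. x i + y i) = (\<lambda>i. S x i + S y i)" "S' (\<lambda>i. x i + y i) = (\<lambda>i. S' x i + S' y i)"
      using bS bS' x y unfolding bounded_lp_op_def by blast+
    thus "(\<lambda>i. c * S (\<lambda>i. x i + y i) i + S' (\<lambda>i. x i + y i) i) =
          (\<lambda>i. (c * S x i + S' x i) + (c * S y i + S' y i))"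
      by (simp add: algebra_simps)
  next
    fix x :: "nat \<Rightarrow> 'a" and d assume x: "x \<in> lp_space p"
    have "S (\<lambda>i. d * x i) = (\<lambda>i. d * S x i)" "S' (\<lambda>i. d * x i) = (\<lambda>i. d * S' x i)"
      using bS bS' x unfolding bounded_lp_op_def by blast+
    thus "(\<lambda>i. c * S (\<lambda>i. d * x i) i + S' (\<lambda>i. d * x i) i) = (\<lambda>i. d * (c * S x i + S' x i))"
      by (simp add: algebra_simps)
  next
    show "\<exists>C. \<forall>x\<in>lp_space p. lp_norm p (\<lambda>i. c * S x i + S' x i) \<le> C * lp_norm p x"
      using bC unfolding bnd_def by blast
  qed
  define K where "K = 2 * 2 powr (1/p)"
  have res: "(\<lambda>x i. (c * S x i + S' x i) - (\<Sum>k<n. (c * a k + b k) * uk k x i)) =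
       (\<lambda>x i. c * Ra n x i + Rb n x i)" for n
    unfolding Ra_def Rb_def
    by (intro ext) (simp add: algebra_simps sum.distrib sum_distrib_left)
  have bRc: "bnd p (\<lambda>x i. c * Ra n x i + Rb n x i)" for n
    using bnd_R[OF bounded, where n=n and a="\<lambda>k. c * a k + b k"] unfolding res .
  have est: "lp_op_norm p (\<lambda>x i. c * Ra n x i + Rb n x i) \<le> K * (norm c * lp_op_norm p (Ra n) + lp_op_norm p (Rb n))" for n
  proof (rule opnorm_least[OF p_pos])
    fix x :: "nat \<Rightarrow> 'a" assume x: "x \<in> lp_space p" and x1: "lp_norm p x \<le> 1"
    have ra: "Ra n x \<in> lp_space p" and rb: "Rb n x \<in> lp_space p"
      using bRa bRb x unfolding bnd_def by blast+
    have sc: "(\<lambda>i. c * Ra n x i) \<in> lp_space p" "lp_norm p (\<lambda>i. c * Ra n x i) = norm c * lp_norm p (Ra n x)"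
      using lp_scale[OF p_pos ra] by auto
    have "lp_norm p (\<lambda>i. c * Ra n x i + Rb n x i) \<le> K * (lp_norm p (\<lambda>i. c * Ra n x i) + lp_norm p (Rb n x))"
      unfolding K_def using lp_add[OF p_pos sc(1) rb] by blast
    also have "\<dots> \<le> K * (norm c * lp_op_norm p (Ra n) + lp_op_norm p (Rb n))"
      unfolding sc(2) K_def
      using opnorm_le[OF p_pos bRa x x1] opnorm_le[OF p_pos bRb x x1]
      by (intro mult_left_mono add_mono) auto
    finally show "lp_norm p (\<lambda>i. c * Ra n x i + Rb n x i) \<le> K * (norm c * lp_op_norm p (Ra n) + lp_op_norm p (Rb n))" .
  qed
  have "(\<lambda>n. lp_op_norm p (\<lambda>x i. c * Ra n x i + Rb n x i)) \<longlonglongrightarrow> 0"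
  proof (rule Lim_null_comparison)
    show "eventually (\<lambda>n. norm (lp_op_norm p (\<lambda>x i. c * Ra n x i + Rb n x i)) \<le>
        K * (norm c * lp_op_norm p (Ra n) + lp_op_norm p (Rb n))) sequentially"
      using est opnorm_nonneg[OF p_pos bRc] by (intro always_eventually) auto
    have "(\<lambda>n. K * (norm c * lp_op_norm p (Ra n) + lp_op_norm p (Rb n))) \<longlonglongrightarrow> K * (norm c * 0 + 0)"
      by (intro tendsto_intros limA limB)
    thus "(\<lambda>n. K * (norm c * lp_op_norm p (Ra n) + lp_op_norm p (Rb n))) \<longlonglongrightarrow> 0" by simp
  qed
  thus ?thesis unfolding op_series_sums_def res using bounded by simp
qed

lemma injective:
  assumes u_nz: "\<exists>x \<in> lp_space p. u x \<noteq> (\<lambda>_. 0)"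
    and S: "op_series_sums p a uk S" and S': "op_series_sums p b uk S'"
    and eq: "\<forall>x \<in> lp_space p. S x = S' x"
  shows "a = b"
proof
  fix k
  obtain x0 where x0: "x0 \<in> lp_space p" "u x0 \<noteq> (\<lambda>_. 0)" using u_nz by blast
  then obtain i0 where i0: "u x0 i0 \<noteq> 0" by auto
  define m where "m = enumerate (N k) i0"
  have mk: "m \<in> N k" unfolding m_def by (rule enumerate_in_set[OF N_inf])
  have km: "kof m = k" by (rule kof_unique[OF mk])
  have ukm: "uk k x0 m = u x0 i0" unfolding m_def by (rule uk_on)
  have lim: "(\<lambda>n. \<Sum>j<n. d j * uk j x0 m) \<longlonglongrightarrow> d k * u x0 i0" for d
  proof -
    have "(\<Sum>j<n. d j * uk j x0 m) = (if k < n then d k * u x0 i0 else 0)" for n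
    proof -
      have "(\<Sum>j<n. d j * uk j x0 m) = (\<Sum>j<n. if j = k then d j * uk j x0 m else 0)"
        by (rule sum.cong) (auto simp: uk_other km[symmetric])
      thus ?thesis using ukm by simp
    qed
    hence "(\<lambda>n. \<Sum>j<n. d j * uk j x0 m) = (\<lambda>n. if k < n then d k * u x0 i0 else 0)" by (rule ext)
    moreover have "(\<lambda>n. (\<lambda>n. if k < n then d k * u x0 i0 else 0) (n + Suc k)) \<longlonglongrightarrow> d k * u x0 i0"
      by simp
    hence "(\<lambda>n. if k < n then d k * u x0 i0 else 0) \<longlonglongrightarrow> d k * u x0 i0"
      by (rule LIMSEQ_offset)
    ultimately show ?thesis by simp
  qed
  have "S x0 m = a k * u x0 i0" using LIMSEQ_unique[OF pointwise[OF S x0(1)] lim] .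
  moreover have "S' x0 m = b k * u x0 i0" using LIMSEQ_unique[OF pointwise[OF S' x0(1)] lim] .
  ultimately show "a k = b k" using eq x0(1) i0 by auto
qed

end

theorem lemma2p1:
  fixes p :: real
    and u :: "(nat \<Rightarrow> 'a::real_normed_field) \<Rightarrow> (nat \<Rightarrow> 'a)"
    and N :: "nat \<Rightarrow> nat set"
    and uk :: "nat \<Rightarrow> (nat \<Rightarrow> 'a) \<Rightarrow> (nat \<Rightarrow> 'a)"
  assumes p_pos: "p > 0"
    and u_op: "bounded_lp_op p u"
    and u_nz: "\<exists>x \<in> lp_space p. u x \<noteq> (\<lambda>_. 0)"
    and N_inf: "\<And>k. infinite (N k)"
    and N_disj: "\<And>k j. k \<noteq> j \<Longrightarrow> N k \<inter> N j = {}"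
    and N_cover: "(\<Union>k. N k) = UNIV"
    and uk_on: "\<And>k x i. uk k x (enumerate (N k) i) = u x i"
    and uk_off: "\<And>k x m. m \<notin> N k \<Longrightarrow> uk k x m = 0"
  shows
    "(\<forall>a \<in> lp_space p. \<exists>S. op_series_sums p a uk S)
   \<and> (\<forall>a S S'. op_series_sums p a uk S \<longrightarrow> op_series_sums p a uk S'
          \<longrightarrow> (\<forall>x \<in> lp_space p. S x = S' x))
   \<and> (\<forall>a b S S' c. a \<in> lp_space p \<longrightarrow> b \<in> lp_space p
          \<longrightarrow> op_series_sums p a uk S \<longrightarrow> op_series_sums p b uk S'
          \<longrightarrow> op_series_sums p (\<lambda>k. c * a k + b k) uk (\<lambda>x i. c * S x i + S' x i))
   \<and> (\<forall>a b S S'. a \<in> lp_space p \<longrightarrow> b \<in> lp_space p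
          \<longrightarrow> op_series_sums p a uk S \<longrightarrow> op_series_sums p b uk S'
          \<longrightarrow> (\<forall>x \<in> lp_space p. S x = S' x) \<longrightarrow> a = b)"
proof -
  interpret L: lpsetup p u N uk
    using assms by unfold_locales auto
  have 2: "S x = S' x" if "op_series_sums p a uk S" "op_series_sums p a uk S'" "x \<in> lp_space p" for a S S' x
  proof
    fix m
    show "S x m = S' x m"
      using LIMSEQ_unique[OF L.pointwise[OF that(1,3)] L.pointwise[OF that(2,3)]] .
  qed
  show ?thesis
  proof (intro conjI)
    show "\<forall>a \<in> lp_space p. \<exists>S. op_series_sums p a uk S" using L.existence by blast
    show "\<forall>a S S'. op_series_sums p a uk S \<longrightarrow> op_series_sums p a uk S'
          \<longrightarrow> (\<forall>x \<in> lp_space p. S x = S' x)" using 2 by blast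
    show "\<forall>a b S S' c. a \<in> lp_space p \<longrightarrow> b \<in> lp_space p
          \<longrightarrow> op_series_sums p a uk S \<longrightarrow> op_series_sums p b uk S'
          \<longrightarrow> op_series_sums p (\<lambda>k. c * a k + b k) uk (\<lambda>x i. c * S x i + S' x i)"
      using L.combination by blast
    show "\<forall>a b S S'. a \<in> lp_space p \<longrightarrow> b \<in> lp_space p
          \<longrightarrow> op_series_sums p a uk S \<longrightarrow> op_series_sums p b uk S'
          \<longrightarrow> (\<forall>x \<in> lp_space p. S x = S' x) \<longrightarrow> a = b"
      using L.injective[OF u_nz] by blast
  qed
qed

end
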